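(* Let $\Omega\subseteq\mathbb{R}^n$ be bounded and measurable, $Y$ a Hilbert space, $S:L^2(\Omega)\to Y$ linear and continuous, $z\in Y$, $u_a,u_b\in L^\infty(\Omega)$, $u_a\le u_b$, $U_{\mathrm{ad}}=\{u\in L^2(\Omega):u_a\le u\le u_b\text{ a.e.}\}$, and let $(S_h)_h$, $\delta$ be as in the context. Let $u^\dagger$ be a solution of $\min_{u\in U_{\mathrm{ad}}}\frac12\|Su-z\|_Y^2$ such that there exists $w\in Y$ with $u^\dagger=P_{U_{\mathrm{ad}}}(S^\ast w)$. Let $h_{\max}>0$ and $\varepsilon_k=0$ for all $k$. For each $h$ let $(u_k^{\mathrm{in}})_k$ be generated by the inexact Bregman algorithm of the context (with this $h$). Then there exists a constant $C$ such that for every $0<h\le h_{\max}$ there exists a stopping index $k(h)$ with \[\sum_{i=1}^{k(h)}H_i\le C<\infty,\qquad H_i:=\delta(h)\Big[\frac{\rho_i}{\alpha_i}+\frac{\gamma_{i-1}}{\alpha_i}+\frac{\gamma_{i-1}\rho_i}{\alpha_i}\Big]+\delta(h)^2\Big[\frac{\rho_i^2}{\alpha_i^2}+\frac{\rho_i^2}{\alpha_i}\Big],\] and $k(h)\to\infty$ as $h\to0$. Furthermore $u_{k(h)}^{\mathrm{in}}\to u^\dagger$ in $L^2(\Omega)$ as $h\to0$.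
   Context: $\|\cdot\|$: $L^2(\Omega)$ norm; $P_{U_{\mathrm{ad}}}$: $L^2$-projection onto $U_{\mathrm{ad}}$. For each $h>0$, $S_h:L^2(\Omega)\to Y$ is linear continuous with finite-dimensional range, and there is a continuous, monotonically increasing $\delta:\mathbb{R}^+\to\mathbb{R}^+$, $\delta(0)=0$, with $\|(S-S_h)u_h\|_Y+\|(S^\ast-S_h^\ast)(S_hu_h-z)\|\le\delta(h)$ for all $h\ge0$, $u_h\in U_{\mathrm{ad}}$. $(\alpha_k)_k$ is a bounded sequence of positive reals, $\gamma_k:=\sum_{j=1}^k\alpha_j^{-1}$ ($\gamma_0=0$), $\rho_k:=\sqrt{\alpha_k^{-1}(1+\alpha_k^{-1})}$. $\mathcal B(\alpha,\lambda,u):=(1+\frac1\alpha)\|u-P_{U_{\mathrm{ad}}}(\frac1\alpha S_h^\ast(z-S_hu)+\lambda)\|$. Inexact Bregman algorithm: $u_0^{\mathrm{in}}=P_{U_{\mathrm{ad}}}(0)$, $\lambda_0^{\mathrm{in}}=0$; for $k\ge1$ find $u_k^{\mathrm{in}}\in U_{\mathrm{ad}}$ with $\mathcal B(\alpha_k,\lambda_{k-1}^{\mathrm{in}},u_k^{\mathrm{in}})\le\varepsilon_k$, then set $\lambda_k^{\mathrm{in}}=\sum_{i=1}^k\frac1{\alpha_i}S_h^\ast(z-S_hu_i^{\mathrm{in}})$. *)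

theory Defs
  imports "HOL-Analysis.Analysis"
begin

text \<open>Elements of L^2(Omega) are represented by real-valued functions on real^'n;
  membership, norm and inner product are taken w.r.t. Lebesgue measure restricted to Omega.
  Equality in L^2 is equality up to L^2-norm zero (a.e.).\<close>

definition L2 :: "(real^'n) set \<Rightarrow> (real^'n \<Rightarrow> real) set" where
  "L2 \<Omega> = {f. f \<in> borel_measurable (lebesgue_on \<Omega>) \<and> integrable (lebesgue_on \<Omega>) (\<lambda>x. (f x)^2)}"

definition L2inner :: "(real^'n) set \<Rightarrow> (real^'n \<Rightarrow> real) \<Rightarrow> (real^'n \<Rightarrow> real) \<Rightarrow> real" where
  "L2inner \<Omega> f g = (LINT x|lebesgue_on \<Omega>. f x * g x)"

definition L2norm :: "(real^'n) set \<Rightarrow> (real^'n \<Rightarrow> real) \<Rightarrow> real" where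
  "L2norm \<Omega> f = sqrt (LINT x|lebesgue_on \<Omega>. (f x)^2)"

definition Linfty :: "(real^'n) set \<Rightarrow> (real^'n \<Rightarrow> real) set" where
  "Linfty \<Omega> = {f. f \<in> borel_measurable (lebesgue_on \<Omega>) \<and>
      (\<exists>M. AE x in lebesgue_on \<Omega>. \<bar>f x\<bar> \<le> M)}"

definition Uad :: "(real^'n) set \<Rightarrow> (real^'n \<Rightarrow> real) \<Rightarrow> (real^'n \<Rightarrow> real) \<Rightarrow> (real^'n \<Rightarrow> real) set" where
  "Uad \<Omega> ua ub = {u \<in> L2 \<Omega>. AE x in lebesgue_on \<Omega>. ua x \<le> u x \<and> u x \<le> ub x}"

definition PUad :: "(real^'n) set \<Rightarrow> (real^'n \<Rightarrow> real) \<Rightarrow> (real^'n \<Rightarrow> real) \<Rightarrow> (real^'n \<Rightarrow> real) \<Rightarrow> (real^'n \<Rightarrow> real)" where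
  "PUad \<Omega> ua ub v = (SOME u. u \<in> Uad \<Omega> ua ub \<and>
      (\<forall>w\<in>Uad \<Omega> ua ub. L2norm \<Omega> (\<lambda>x. v x - u x) \<le> L2norm \<Omega> (\<lambda>x. v x - w x)))"

definition L2_bounded_linear :: "(real^'n) set \<Rightarrow> ((real^'n \<Rightarrow> real) \<Rightarrow> 'y::real_normed_vector) \<Rightarrow> bool" where
  "L2_bounded_linear \<Omega> T \<longleftrightarrow>
     (\<forall>u\<in>L2 \<Omega>. \<forall>v\<in>L2 \<Omega>. T (\<lambda>x. u x + v x) = T u + T v) \<and>
     (\<forall>u\<in>L2 \<Omega>. \<forall>c. T (\<lambda>x. c * u x) = c *\<^sub>R T u) \<and>
     (\<exists>K. \<forall>u\<in>L2 \<Omega>. norm (T u) \<le> K * L2norm \<Omega> u)"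

definition is_adjoint :: "(real^'n) set \<Rightarrow> ((real^'n \<Rightarrow> real) \<Rightarrow> 'y::real_inner) \<Rightarrow> ('y \<Rightarrow> (real^'n \<Rightarrow> real)) \<Rightarrow> bool" where
  "is_adjoint \<Omega> T Tadj \<longleftrightarrow>
     (\<forall>y. Tadj y \<in> L2 \<Omega>) \<and> (\<forall>u\<in>L2 \<Omega>. \<forall>y. inner (T u) y = L2inner \<Omega> u (Tadj y))"

definition gam :: "(nat \<Rightarrow> real) \<Rightarrow> nat \<Rightarrow> real" where
  "gam \<alpha> k = (\<Sum>j=1..k. 1 / \<alpha> j)"

definition rho :: "(nat \<Rightarrow> real) \<Rightarrow> nat \<Rightarrow> real" where
  "rho \<alpha> k = sqrt ((1 / \<alpha> k) * (1 + 1 / \<alpha> k))"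

definition Hterm :: "(nat \<Rightarrow> real) \<Rightarrow> real \<Rightarrow> nat \<Rightarrow> real" where
  "Hterm \<alpha> d i =
     d * (rho \<alpha> i / \<alpha> i + gam \<alpha> (i - 1) / \<alpha> i + gam \<alpha> (i - 1) * rho \<alpha> i / \<alpha> i)
   + d^2 * ((rho \<alpha> i)^2 / (\<alpha> i)^2 + (rho \<alpha> i)^2 / \<alpha> i)"

definition Bfun :: "(real^'n) set \<Rightarrow> (real^'n \<Rightarrow> real) \<Rightarrow> (real^'n \<Rightarrow> real) \<Rightarrow>
    ((real^'n \<Rightarrow> real) \<Rightarrow> 'y::real_inner) \<Rightarrow> ('y \<Rightarrow> (real^'n \<Rightarrow> real)) \<Rightarrow> 'y \<Rightarrow>
    real \<Rightarrow> (real^'n \<Rightarrow> real) \<Rightarrow> (real^'n \<Rightarrow> real) \<Rightarrow> real" where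
  "Bfun \<Omega> ua ub Sh Shadj z a lam u =
     (1 + 1 / a) * L2norm \<Omega> (\<lambda>y. u y - PUad \<Omega> ua ub (\<lambda>x. (1 / a) * Shadj (z - Sh u) x + lam x) y)"

definition lam_in :: "(nat \<Rightarrow> real) \<Rightarrow> ((real^'n \<Rightarrow> real) \<Rightarrow> 'y::real_inner) \<Rightarrow> ('y \<Rightarrow> (real^'n \<Rightarrow> real)) \<Rightarrow> 'y \<Rightarrow>
    (nat \<Rightarrow> (real^'n \<Rightarrow> real)) \<Rightarrow> nat \<Rightarrow> (real^'n \<Rightarrow> real)" where
  "lam_in \<alpha> Sh Shadj z uin k = (\<lambda>x. \<Sum>i=1..k. (1 / \<alpha> i) * Shadj (z - Sh (uin i)) x)"

definition inexact_bregman :: "(real^'n) set \<Rightarrow> (real^'n \<Rightarrow> real) \<Rightarrow> (real^'n \<Rightarrow> real) \<Rightarrow>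
    ((real^'n \<Rightarrow> real) \<Rightarrow> 'y::real_inner) \<Rightarrow> ('y \<Rightarrow> (real^'n \<Rightarrow> real)) \<Rightarrow> 'y \<Rightarrow>
    (nat \<Rightarrow> real) \<Rightarrow> (nat \<Rightarrow> real) \<Rightarrow> (nat \<Rightarrow> (real^'n \<Rightarrow> real)) \<Rightarrow> bool" where
  "inexact_bregman \<Omega> ua ub Sh Shadj z \<alpha> eps uin \<longleftrightarrow>
     uin 0 = PUad \<Omega> ua ub (\<lambda>x. 0) \<and>
     (\<forall>k\<ge>1. uin k \<in> Uad \<Omega> ua ub \<and>
        Bfun \<Omega> ua ub Sh Shadj z (\<alpha> k) (lam_in \<alpha> Sh Shadj z uin (k - 1)) (uin k) \<le> eps k)"

end

theory Submission
  imports Defs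
begin

lemma key_step:
  fixes f V a s0 a0 z w Sk Ak :: "'y::real_inner" and t g d Ek :: real
  assumes t: "t > 0" and d0: "d \<ge> 0" and g0: "g \<ge> 0"
  and e0: "norm (s0 - a0) \<le> d" and ek: "norm (Sk - Ak) \<le> d"
  and opt: "inner (z - s0) (s0 - Sk) \<ge> 0"
  and f: "f = a0 - Ak"
  and E: "Ek \<le> - g * inner f (z - a0) - inner f (V + t *\<^sub>R f) - inner (Sk - s0) w"
  shows "t * Ek + (1/2)*(norm (V + t *\<^sub>R f - w))\<^sup>2 \<le> (1/2)*(norm (V - w))\<^sup>2
     + d*2*t*(g*norm(z - s0) + norm w) + (1/2)*g\<^sup>2*d\<^sup>2"
proof -
  let ?a = "z - s0"
  have s2a: "inner f ?a \<ge> - 2*d*norm ?a"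
  proof -
    have "f = (s0 - Sk) - (s0 - a0) + (Sk - Ak)" using f by simp
    hence "inner f ?a = inner (s0 - Sk) ?a - inner (s0 - a0) ?a + inner (Sk - Ak) ?a"
      by (simp add: inner_diff_left inner_add_left)
    moreover have "inner (s0 - Sk) ?a \<ge> 0" using opt by (simp add: inner_commute)
    moreover have "inner (s0 - a0) ?a \<le> d * norm ?a"
      using Cauchy_Schwarz_ineq2[of "s0-a0" ?a] e0 mult_right_mono[OF e0 norm_ge_zero[of ?a]]
      by (smt (verit) norm_cauchy_schwarz)
    moreover have "- inner (Sk - Ak) ?a \<le> d * norm ?a"
    proof -
      have "inner (Ak - Sk) ?a \<le> d * norm ?a"
        using norm_cauchy_schwarz[of "Ak-Sk" ?a] mult_right_mono[OF ek norm_ge_zero[of ?a]]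
        by (simp add: norm_minus_commute)
      moreover have "- inner (Sk - Ak) ?a = inner (Ak - Sk) ?a" by (simp add: inner_diff_left)
      ultimately show ?thesis by linarith
    qed
    ultimately show ?thesis by linarith
  qed
  have s2b: "inner f (s0 - a0) \<ge> - d * norm f"
  proof -
    have "inner (-f) (s0 - a0) \<le> norm f * d"
      using norm_cauchy_schwarz[of "-f" "s0 - a0"] mult_left_mono[OF e0 norm_ge_zero[of f]]
      by simp
    thus ?thesis by (simp add: inner_minus_left mult.commute)
  qed
  have za: "z - a0 = ?a + (s0 - a0)" by simp
  have s2: "- inner f (z - a0) \<le> 2*d*norm ?a + d*norm f"
    using s2a s2b unfolding za inner_add_right by linarith
  have s3: "- inner (Sk - s0) w \<le> inner f w + 2*d*norm w"
  proof -
    have "inner (s0 - Sk) w = inner f w + inner (s0 - a0) w - inner (Sk - Ak) w"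
      unfolding f by (simp add: inner_add_left inner_diff_left)
    moreover have "- inner (Sk - s0) w = inner (s0 - Sk) w" by (simp add: inner_diff_left)
    moreover have "inner (s0 - a0) w \<le> d * norm w"
      using norm_cauchy_schwarz[of "s0-a0" w] mult_right_mono[OF e0 norm_ge_zero[of w]] by linarith
    moreover have "- inner (Sk - Ak) w \<le> d * norm w"
    proof -
      have "inner (Ak - Sk) w \<le> d * norm w"
        using norm_cauchy_schwarz[of "Ak-Sk" w] mult_right_mono[OF ek norm_ge_zero[of w]]
        by (simp add: norm_minus_commute)
      moreover have "- inner (Sk - Ak) w = inner (Ak - Sk) w" by (simp add: inner_diff_left)
      ultimately show ?thesis by linarith
    qed
    ultimately show ?thesis by linarith
  qed
  have E2: "Ek \<le> g*(2*d*norm ?a + d*norm f) - inner f (V + t *\<^sub>R f - w) + 2*d*norm w"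
  proof -
    have "- g * inner f (z - a0) \<le> g*(2*d*norm ?a + d*norm f)"
      using mult_left_mono[OF s2 g0] by simp
    moreover have "inner f (V + t *\<^sub>R f - w) = inner f (V + t *\<^sub>R f) - inner f w"
      by (simp add: inner_diff_right)
    ultimately show ?thesis using E s3 by linarith
  qed
  have E3': "t*Ek \<le> t*(g*(2*d*norm ?a + d*norm f) - inner f (V + t *\<^sub>R f - w) + 2*d*norm w)"
    using mult_left_mono[OF E2 less_imp_le[OF t]] .
  have E3: "t*Ek \<le> t*g*(2*d*norm ?a) + g*d*(t*norm f) - inner (t *\<^sub>R f) (V + t *\<^sub>R f - w) + t*2*d*norm w"
    using E3' by (simp add: algebra_simps)
  define x where "x = V + t *\<^sub>R f - w"
  define y where "y = V - w"
  have xy: "t *\<^sub>R f = x - y" unfolding x_def y_def by simp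
  have s5: "- inner (x - y) x = (1/2)*(norm y)\<^sup>2 - (1/2)*(norm x)\<^sup>2 - (1/2)*(norm (x - y))\<^sup>2"
    by (simp add: power2_norm_eq_inner inner_diff_left inner_diff_right inner_commute algebra_simps)
  have nt: "t * norm f = norm (x - y)" using t xy[symmetric] by simp
  have s6: "g*d*norm (x - y) \<le> (1/2)*(norm (x - y))\<^sup>2 + (1/2)*g\<^sup>2*d\<^sup>2"
  proof -
    have "0 \<le> (norm (x - y) - g*d)\<^sup>2" by simp
    also have "\<dots> = (norm (x - y))\<^sup>2 - 2*(g*d*norm (x - y)) + g\<^sup>2*d\<^sup>2"
      by (simp add: power2_diff power_mult_distrib)
    finally show ?thesis by linarith
  qed
  have i1: "inner (t *\<^sub>R f) (V + t *\<^sub>R f - w) = inner (x - y) x" proof -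
    have "V + t *\<^sub>R f - w = x" by (simp add: x_def)
    thus ?thesis using xy by metis
  qed
  have i2: "d*2*t*(g*norm ?a + norm w) = t*g*(2*d*norm ?a) + t*2*d*norm w"
    by (simp add: algebra_simps)
  have i3: "(1/2)*(norm (V + t *\<^sub>R f - w))\<^sup>2 = (1/2)*(norm x)\<^sup>2" using x_def by simp
  have i4: "(1/2)*(norm (V - w))\<^sup>2 = (1/2)*(norm y)\<^sup>2" using y_def by simp
  have i5: "g*d*(t*norm f) = g*d*norm(x-y)" using nt by simp
  show ?thesis
    using E3 s5 s6 i5 i1 i2 i3 i4 by linarith
qed

lemma key_sum:
  fixes Sy Ay :: "nat \<Rightarrow> 'y::real_inner" and s0 a0 z w :: 'y and \<tau> E :: "nat \<Rightarrow> real" and d :: real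
  assumes t: "\<And>k. k \<ge> 1 \<Longrightarrow> \<tau> k > 0" and d0: "d \<ge> 0"
  and e0: "norm (s0 - a0) \<le> d" and ek: "\<And>k. k \<ge> 1 \<Longrightarrow> norm (Sy k - Ay k) \<le> d"
  and opt: "\<And>k. k \<ge> 1 \<Longrightarrow> inner (z - s0) (s0 - Sy k) \<ge> 0"
  and E: "\<And>k. k \<ge> 1 \<Longrightarrow> E k \<le> (\<Sum>i=1..k. \<tau> i * inner (Ay k - a0) (z - Ay i)) - inner (Sy k - s0) w"
  shows "(\<Sum>k=1..K. \<tau> k * E k) + (1/2)*(norm ((\<Sum>i=1..K. \<tau> i *\<^sub>R (a0 - Ay i)) - w))\<^sup>2
    \<le> (1/2)*(norm w)\<^sup>2 + (\<Sum>k=1..K. d*2*\<tau> k*((\<Sum>j=1..k. \<tau> j)*norm(z - s0) + norm w) + (1/2)*(\<Sum>j=1..k. \<tau> j)\<^sup>2*d\<^sup>2)"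
proof (induction K)
  case 0
  then show ?case by simp
next
  case (Suc K)
  define k where "k = Suc K"
  define f where "f = a0 - Ay k"
  define V where "V = (\<Sum>i=1..K. \<tau> i *\<^sub>R (a0 - Ay i))"
  define g where "g = (\<Sum>j=1..k. \<tau> j)"
  have k1: "k \<ge> 1" by (simp add: k_def)
  have g0: "g \<ge> 0" unfolding g_def by (rule sum_nonneg) (use t in force)
  have Vk: "(\<Sum>i=1..k. \<tau> i *\<^sub>R (a0 - Ay i)) = V + \<tau> k *\<^sub>R f"
    by (simp add: k_def V_def f_def)
  have pt: "\<And>i. \<tau> i * inner (Ay k - a0) (z - Ay i) = - (\<tau> i * inner f (z - a0)) - inner f (\<tau> i *\<^sub>R (a0 - Ay i))"
    by (simp add: f_def inner_diff_right inner_diff_left algebra_simps)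
  have sumE: "(\<Sum>i=1..k. \<tau> i * inner (Ay k - a0) (z - Ay i)) = - g * inner f (z - a0) - inner f (V + \<tau> k *\<^sub>R f)"
    unfolding pt sum_subtractf sum_negf g_def Vk[symmetric] inner_sum_right
    by (simp add: sum_distrib_right)
  have st: "\<tau> k * E k + (1/2)*(norm (V + \<tau> k *\<^sub>R f - w))\<^sup>2 \<le> (1/2)*(norm (V - w))\<^sup>2
     + d*2*\<tau> k*(g*norm(z - s0) + norm w) + (1/2)*g\<^sup>2*d\<^sup>2"
    apply (rule key_step[OF t[OF k1] d0 g0 e0 ek[OF k1] opt[OF k1] f_def])
    using E[OF k1] sumE by simp
  show ?case
    using Suc.IH st unfolding k_def[symmetric] V_def[symmetric] Vk g_def
    by (simp add: k_def)
qed

lemma L2_D: assumes "f \<in> L2 \<Omega>" shows "f \<in> borel_measurable (lebesgue_on \<Omega>)"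
  "integrable (lebesgue_on \<Omega>) (\<lambda>x. (f x)\<^sup>2)"
  using assms by (auto simp: L2_def)

lemma L2_I: "f \<in> borel_measurable (lebesgue_on \<Omega>) \<Longrightarrow> integrable (lebesgue_on \<Omega>) (\<lambda>x. (f x)\<^sup>2) \<Longrightarrow> f \<in> L2 \<Omega>"
  by (auto simp: L2_def)

lemma L2_prod_int: assumes "f \<in> L2 \<Omega>" "g \<in> L2 \<Omega>"
  shows "integrable (lebesgue_on \<Omega>) (\<lambda>x. f x * g x)"
proof (rule Bochner_Integration.integrable_bound)
  show "integrable (lebesgue_on \<Omega>) (\<lambda>x. (f x)\<^sup>2 + (g x)\<^sup>2)"
    using L2_D[OF assms(1)] L2_D[OF assms(2)] by auto
  show "(\<lambda>x. f x * g x) \<in> borel_measurable (lebesgue_on \<Omega>)"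
    using L2_D[OF assms(1)] L2_D[OF assms(2)] by auto
  show "AE x in lebesgue_on \<Omega>. norm (f x * g x) \<le> norm ((f x)\<^sup>2 + (g x)\<^sup>2)"
  proof (intro AE_I2)
    fix x
    have "\<bar>f x * g x\<bar> \<le> (f x)\<^sup>2 + (g x)\<^sup>2"
      using sum_squares_bound[of "f x" "g x"] sum_squares_bound[of "-f x" "g x"]
      by (simp add: abs_if algebra_simps)
    thus "norm (f x * g x) \<le> norm ((f x)\<^sup>2 + (g x)\<^sup>2)" by simp
  qed
qed

lemma L2_add: assumes "f \<in> L2 \<Omega>" "g \<in> L2 \<Omega>"
  shows "(\<lambda>x. f x + g x) \<in> L2 \<Omega>"
proof (rule L2_I)
  show "(\<lambda>x. f x + g x) \<in> borel_measurable (lebesgue_on \<Omega>)"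
    using L2_D[OF assms(1)] L2_D[OF assms(2)] by auto
  show "integrable (lebesgue_on \<Omega>) (\<lambda>x. (f x + g x)\<^sup>2)"
  proof (rule Bochner_Integration.integrable_bound)
    show "integrable (lebesgue_on \<Omega>) (\<lambda>x. 2*(f x)\<^sup>2 + 2*(g x)\<^sup>2)"
      using L2_D[OF assms(1)] L2_D[OF assms(2)] by auto
    show "(\<lambda>x. (f x + g x)\<^sup>2) \<in> borel_measurable (lebesgue_on \<Omega>)"
      using L2_D[OF assms(1)] L2_D[OF assms(2)] by auto
    show "AE x in lebesgue_on \<Omega>. norm ((f x + g x)\<^sup>2) \<le> norm (2*(f x)\<^sup>2 + 2*(g x)\<^sup>2)"
    proof (intro AE_I2)
      fix x
      have "(f x + g x)\<^sup>2 \<le> 2*(f x)\<^sup>2 + 2*(g x)\<^sup>2"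
        using sum_squares_bound[of "f x" "g x"] by (simp add: power2_sum)
      thus "norm ((f x + g x)\<^sup>2) \<le> norm (2*(f x)\<^sup>2 + 2*(g x)\<^sup>2)" by simp
    qed
  qed
qed

lemma L2_scale: assumes "f \<in> L2 \<Omega>" shows "(\<lambda>x. c * f x) \<in> L2 \<Omega>"
proof (rule L2_I)
  show "(\<lambda>x. c * f x) \<in> borel_measurable (lebesgue_on \<Omega>)"
    using L2_D[OF assms(1)] by auto
  have "integrable (lebesgue_on \<Omega>) (\<lambda>x. c\<^sup>2 * (f x)\<^sup>2)"
    using L2_D[OF assms(1)] by auto
  thus "integrable (lebesgue_on \<Omega>) (\<lambda>x. (c * f x)\<^sup>2)"
    by (simp add: power_mult_distrib)
qed

lemma L2_diff: assumes "f \<in> L2 \<Omega>" "g \<in> L2 \<Omega>"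
  shows "(\<lambda>x. f x - g x) \<in> L2 \<Omega>"
  using L2_add[OF assms(1) L2_scale[OF assms(2), of "-1"]] by simp

lemma L2_sum: assumes "\<And>i. i \<in> I \<Longrightarrow> f i \<in> L2 \<Omega>"
  shows "(\<lambda>x. \<Sum>i\<in>I. c i * f i x) \<in> L2 \<Omega>"
  using assms
proof (induction I rule: infinite_finite_induct)
  case (infinite A)
  then show ?case by (simp add: L2_def)
next
  case empty
  then show ?case by (simp add: L2_def)
next
  case (insert x F)
  then show ?case using L2_add[OF L2_scale[of "f x" \<Omega> "c x"], of "\<lambda>y. \<Sum>i\<in>F. c i * f i y"] by simp
qed

lemma L2norm_sq: "f \<in> L2 \<Omega> \<Longrightarrow> (L2norm \<Omega> f)\<^sup>2 = (LINT x|lebesgue_on \<Omega>. (f x)\<^sup>2)"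
  unfolding L2norm_def by (simp add: integral_nonneg_AE)

lemma L2norm_zero_ae: assumes "f \<in> L2 \<Omega>" "L2norm \<Omega> f \<le> 0"
  shows "AE x in lebesgue_on \<Omega>. f x = 0"
proof -
  have "(LINT x|lebesgue_on \<Omega>. (f x)\<^sup>2) = 0"
    using assms unfolding L2norm_def
    by (metis (no_types, lifting) integral_nonneg_AE le_less_trans not_less real_sqrt_gt_zero zero_le_power2 AE_I2 order_antisym)
  hence "AE x in lebesgue_on \<Omega>. (f x)\<^sup>2 = 0"
    using integral_nonneg_eq_0_iff_AE[of "lebesgue_on \<Omega>" "\<lambda>x. (f x)\<^sup>2"] L2_D[OF assms(1)] by auto
  thus ?thesis by simp
qed

lemma lin_diff: assumes T: "L2_bounded_linear \<Omega> T" and u: "u \<in> L2 \<Omega>" and v: "v \<in> L2 \<Omega>"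
  shows "T (\<lambda>x. u x - v x) = T u - T v"
proof -
  have vs: "(\<lambda>x. (-1) * v x) \<in> L2 \<Omega>" using L2_scale[OF v] .
  have add: "\<And>u v. u \<in> L2 \<Omega> \<Longrightarrow> v \<in> L2 \<Omega> \<Longrightarrow> T (\<lambda>x. u x + v x) = T u + T v"
    using T unfolding L2_bounded_linear_def by blast
  have "T (\<lambda>x. u x + (\<lambda>x. (-1) * v x) x) = T u + T (\<lambda>x. (-1) * v x)"
    using add[OF u vs] .
  moreover have "T (\<lambda>x. (-1) * v x) = (-1) *\<^sub>R T v"
    using T v unfolding L2_bounded_linear_def by blast
  ultimately show ?thesis by simp
qed

lemma lin_comb: assumes T: "L2_bounded_linear \<Omega> T" and u: "u \<in> L2 \<Omega>" and v: "v \<in> L2 \<Omega>"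
  shows "T (\<lambda>x. u x + t * (v x - u x)) = T u + t *\<^sub>R (T v - T u)"
proof -
  have d: "(\<lambda>x. v x - u x) \<in> L2 \<Omega>" using L2_diff[OF v u] .
  have ds: "(\<lambda>x. t * (\<lambda>x. v x - u x) x) \<in> L2 \<Omega>" using L2_scale[OF d] by simp
  have add: "\<And>u v. u \<in> L2 \<Omega> \<Longrightarrow> v \<in> L2 \<Omega> \<Longrightarrow> T (\<lambda>x. u x + v x) = T u + T v"
    using T unfolding L2_bounded_linear_def by blast
  have "T (\<lambda>x. u x + (\<lambda>x. t * (\<lambda>x. v x - u x) x) x) = T u + T (\<lambda>x. t * (\<lambda>x. v x - u x) x)"
    using add[OF u ds] .
  moreover have "T (\<lambda>x. t * (\<lambda>x. v x - u x) x) = t *\<^sub>R T (\<lambda>x. v x - u x)"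
    using T d unfolding L2_bounded_linear_def by (auto simp del: fun_eq_iff)
  ultimately show ?thesis using lin_diff[OF T v u] by simp
qed

lemma adj_inner: "is_adjoint \<Omega> T Tadj \<Longrightarrow> u \<in> L2 \<Omega> \<Longrightarrow>
   inner (T u) y = (LINT x|lebesgue_on \<Omega>. u x * Tadj y x)"
  unfolding is_adjoint_def L2inner_def by blast

lemma adj_L2: "is_adjoint \<Omega> T Tadj \<Longrightarrow> Tadj y \<in> L2 \<Omega>"
  unfolding is_adjoint_def by blast

definition clamp :: "('a \<Rightarrow> real) \<Rightarrow> ('a \<Rightarrow> real) \<Rightarrow> ('a \<Rightarrow> real) \<Rightarrow> 'a \<Rightarrow> real" where
  "clamp ua ub v = (\<lambda>x. max (ua x) (min (ub x) (v x)))"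

lemma clamp_abs: "(a::real) \<le> b \<Longrightarrow> a \<le> w \<Longrightarrow> w \<le> b \<Longrightarrow> \<bar>v - max a (min b v)\<bar> \<le> \<bar>v - w\<bar>"
  by (auto simp: max_def min_def abs_if)

lemma clamp_sq: "(a::real) \<le> b \<Longrightarrow> a \<le> w \<Longrightarrow> w \<le> b \<Longrightarrow> (v - max a (min b v))\<^sup>2 \<le> (v - w)\<^sup>2"
  using clamp_abs by (metis abs_le_square_iff)

lemma clamp_unique: "(a::real) \<le> b \<Longrightarrow> a \<le> u \<Longrightarrow> u \<le> b \<Longrightarrow> (v - u)\<^sup>2 \<le> (v - max a (min b v))\<^sup>2 \<Longrightarrow> u = max a (min b v)"
proof -
  assume h: "a \<le> b" "a \<le> u" "u \<le> b" "(v - u)\<^sup>2 \<le> (v - max a (min b v))\<^sup>2"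
  hence "\<bar>v - u\<bar> \<le> \<bar>v - max a (min b v)\<bar>" by (metis abs_le_square_iff)
  thus ?thesis using h(1-3) by (auto simp: max_def min_def abs_if split: if_splits)
qed

lemma clamp_mono1: "(a::real) \<le> b \<Longrightarrow> p \<le> q \<Longrightarrow> max a (min b p) \<le> max a (min b q)"
  by (auto simp: max_def min_def)

lemma clamp_mono2: "(a::real) \<le> b \<Longrightarrow> p \<le> q \<Longrightarrow> p - max a (min b p) \<le> q - max a (min b q)"
  by (auto simp: max_def min_def)

lemma clamp_firm: assumes ab: "(a::real) \<le> b"
  shows "(max a (min b p) - max a (min b q))\<^sup>2 \<le> (p - q) * (max a (min b p) - max a (min b q))"
proof -
  define c1 where "c1 = max a (min b p)"
  define c2 where "c2 = max a (min b q)"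
  have "0 \<le> (c1 - c2) * ((p - c1) - (q - c2))"
  proof (cases "p \<le> q")
    case True
    then show ?thesis using clamp_mono1[OF ab True] clamp_mono2[OF ab True]
      unfolding c1_def[symmetric] c2_def[symmetric] by (intro mult_nonpos_nonpos) auto
  next
    case False
    hence F: "q \<le> p" by simp
    then show ?thesis using clamp_mono1[OF ab F] clamp_mono2[OF ab F]
      unfolding c1_def[symmetric] c2_def[symmetric] by (intro mult_nonneg_nonneg) auto
  qed
  hence "(c1 - c2)\<^sup>2 \<le> (p - q) * (c1 - c2)"
    by (simp add: power2_eq_square algebra_simps)
  thus ?thesis unfolding c1_def c2_def .
qed

lemma clamp_bound: "(a::real) \<le> u0 \<Longrightarrow> u0 \<le> b \<Longrightarrow> (max a (min b v))^2 \<le> 2 * v^2 + 2*u0^2"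
proof -
  assume h: "a \<le> u0" "u0 \<le> b"
  have "\<bar>max a (min b v)\<bar> \<le> \<bar>v\<bar> + \<bar>u0\<bar>" using h by (auto simp: max_def min_def abs_if)
  hence "(max a (min b v))\<^sup>2 \<le> (\<bar>v\<bar> + \<bar>u0\<bar>)\<^sup>2"
    by (metis abs_ge_zero abs_le_square_iff abs_of_nonneg add_nonneg_nonneg)
  also have "\<dots> \<le> 2 * v\<^sup>2 + 2*(u0)\<^sup>2"
    using sum_squares_bound[of "\<bar>v\<bar>" "\<bar>u0\<bar>"] by (simp add: power2_sum)
  finally show ?thesis .
qed

lemma P_ae:
  assumes v: "v \<in> L2 \<Omega>" and u0: "u0 \<in> Uad \<Omega> ua ub"
    and uam: "ua \<in> borel_measurable (lebesgue_on \<Omega>)" and ubm: "ub \<in> borel_measurable (lebesgue_on \<Omega>)"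
    and ab: "AE x in lebesgue_on \<Omega>. ua x \<le> ub x"
  shows "PUad \<Omega> ua ub v \<in> Uad \<Omega> ua ub"
    "AE x in lebesgue_on \<Omega>. PUad \<Omega> ua ub v x = clamp ua ub v x"
proof -
  define c where "c = clamp ua ub v"
  have u0L: "u0 \<in> L2 \<Omega>" and AEu0: "AE x in lebesgue_on \<Omega>. ua x \<le> u0 x \<and> u0 x \<le> ub x"
    using u0 by (auto simp: Uad_def)
  have vm: "v \<in> borel_measurable (lebesgue_on \<Omega>)" using L2_D[OF v] by simp
  have cm: "c \<in> borel_measurable (lebesgue_on \<Omega>)"
    unfolding c_def clamp_def using uam ubm vm by auto
  have cL2: "c \<in> L2 \<Omega>"
  proof (rule L2_I[OF cm])
    show "integrable (lebesgue_on \<Omega>) (\<lambda>x. (c x)\<^sup>2)"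
    proof (rule Bochner_Integration.integrable_bound)
      show "integrable (lebesgue_on \<Omega>) (\<lambda>x. 2*(v x)\<^sup>2 + 2*(u0 x)\<^sup>2)"
        using L2_D[OF v] L2_D[OF u0L] by auto
      show "(\<lambda>x. (c x)\<^sup>2) \<in> borel_measurable (lebesgue_on \<Omega>)" using cm by auto
      show "AE x in lebesgue_on \<Omega>. norm ((c x)\<^sup>2) \<le> norm (2*(v x)\<^sup>2 + 2*(u0 x)\<^sup>2)"
        using AEu0 by eventually_elim (auto simp: c_def clamp_def intro!: clamp_bound)
    qed
  qed
  have cU: "c \<in> Uad \<Omega> ua ub"
    unfolding Uad_def using cL2 ab by (auto simp: c_def clamp_def elim!: AE_mp intro!: AE_I2)
  have cmin: "\<forall>w\<in>Uad \<Omega> ua ub. L2norm \<Omega> (\<lambda>x. v x - c x) \<le> L2norm \<Omega> (\<lambda>x. v x - w x)"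
  proof
    fix w assume w: "w \<in> Uad \<Omega> ua ub"
    have wL: "w \<in> L2 \<Omega>" and AEw: "AE x in lebesgue_on \<Omega>. ua x \<le> w x \<and> w x \<le> ub x"
      using w by (auto simp: Uad_def)
    have "(LINT x|lebesgue_on \<Omega>. (v x - c x)\<^sup>2) \<le> (LINT x|lebesgue_on \<Omega>. (v x - w x)\<^sup>2)"
    proof (rule integral_mono_AE)
      show "integrable (lebesgue_on \<Omega>) (\<lambda>x. (v x - c x)\<^sup>2)" using L2_D(2)[OF L2_diff[OF v cL2]] .
      show "integrable (lebesgue_on \<Omega>) (\<lambda>x. (v x - w x)\<^sup>2)" using L2_D(2)[OF L2_diff[OF v wL]] .
      show "AE x in lebesgue_on \<Omega>. (v x - c x)\<^sup>2 \<le> (v x - w x)\<^sup>2"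
        using AEw ab by eventually_elim (auto simp: c_def clamp_def intro!: clamp_sq)
    qed
    thus "L2norm \<Omega> (\<lambda>x. v x - c x) \<le> L2norm \<Omega> (\<lambda>x. v x - w x)"
      unfolding L2norm_def by simp
  qed
  have ex: "\<exists>u. u \<in> Uad \<Omega> ua ub \<and> (\<forall>w\<in>Uad \<Omega> ua ub. L2norm \<Omega> (\<lambda>x. v x - u x) \<le> L2norm \<Omega> (\<lambda>x. v x - w x))"
    using cU cmin by blast
  define P where "P = PUad \<Omega> ua ub v"
  have Pp: "P \<in> Uad \<Omega> ua ub \<and> (\<forall>w\<in>Uad \<Omega> ua ub. L2norm \<Omega> (\<lambda>x. v x - P x) \<le> L2norm \<Omega> (\<lambda>x. v x - w x))"
    unfolding P_def PUad_def by (rule someI_ex[OF ex])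
  thus "PUad \<Omega> ua ub v \<in> Uad \<Omega> ua ub" unfolding P_def by blast
  have PL: "P \<in> L2 \<Omega>" and AEP: "AE x in lebesgue_on \<Omega>. ua x \<le> P x \<and> P x \<le> ub x"
    using Pp by (auto simp: Uad_def)
  have n1: "L2norm \<Omega> (\<lambda>x. v x - P x) \<le> L2norm \<Omega> (\<lambda>x. v x - c x)" using Pp cU by blast
  have i1: "integrable (lebesgue_on \<Omega>) (\<lambda>x. (v x - P x)\<^sup>2)" using L2_D(2)[OF L2_diff[OF v PL]] .
  have i2: "integrable (lebesgue_on \<Omega>) (\<lambda>x. (v x - c x)\<^sup>2)" using L2_D(2)[OF L2_diff[OF v cL2]] .
  have "(L2norm \<Omega> (\<lambda>x. v x - P x))\<^sup>2 \<le> (L2norm \<Omega> (\<lambda>x. v x - c x))\<^sup>2"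
    using n1 by (intro power_mono) (auto simp: L2norm_def)
  hence I1: "(LINT x|lebesgue_on \<Omega>. (v x - P x)\<^sup>2) \<le> (LINT x|lebesgue_on \<Omega>. (v x - c x)\<^sup>2)"
    using L2norm_sq[OF L2_diff[OF v PL]] L2norm_sq[OF L2_diff[OF v cL2]] by simp
  have AEle: "AE x in lebesgue_on \<Omega>. (v x - c x)\<^sup>2 \<le> (v x - P x)\<^sup>2"
    using AEP ab by eventually_elim (auto simp: c_def clamp_def intro!: clamp_sq)
  have ig: "integrable (lebesgue_on \<Omega>) (\<lambda>x. (v x - P x)\<^sup>2 - (v x - c x)\<^sup>2)" using i1 i2 by auto
  have "(LINT x|lebesgue_on \<Omega>. (v x - P x)\<^sup>2 - (v x - c x)\<^sup>2) \<le> 0"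
    using I1 i1 i2 by simp
  moreover have "(LINT x|lebesgue_on \<Omega>. (v x - P x)\<^sup>2 - (v x - c x)\<^sup>2) \<ge> 0"
    using AEle by (intro integral_nonneg_AE) (auto elim!: AE_mp)
  ultimately have "(LINT x|lebesgue_on \<Omega>. (v x - P x)\<^sup>2 - (v x - c x)\<^sup>2) = 0" by linarith
  hence "AE x in lebesgue_on \<Omega>. (v x - P x)\<^sup>2 - (v x - c x)\<^sup>2 = 0"
    using integral_nonneg_eq_0_iff_AE[OF ig] AEle by (auto elim!: AE_mp)
  thus "AE x in lebesgue_on \<Omega>. PUad \<Omega> ua ub v x = clamp ua ub v x"
    using AEP ab unfolding P_def[symmetric]
    by eventually_elim (auto simp: c_def clamp_def intro!: clamp_unique)
qed

lemma lam_in_L2: assumes "is_adjoint \<Omega> A Aadj"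
  shows "lam_in \<alpha> A Aadj z uin k \<in> L2 \<Omega>"
  unfolding lam_in_def by (rule L2_sum) (rule adj_L2[OF assms])

lemma lam_in_Suc: "(\<lambda>x. (1 / \<alpha> (Suc k)) * Aadj (z - A (uin (Suc k))) x + lam_in \<alpha> A Aadj z uin k x)
    = lam_in \<alpha> A Aadj z uin (Suc k)"
  unfolding lam_in_def
  by (rule ext) simp

lemma iter_E:
  fixes S A :: "(real^'n \<Rightarrow> real) \<Rightarrow> 'y::real_inner"
  assumes Slin: "L2_bounded_linear \<Omega> S" and Sadj: "is_adjoint \<Omega> S Sadj"
    and Alin: "L2_bounded_linear \<Omega> A" and Aadj: "is_adjoint \<Omega> A Aadj"
    and uam: "ua \<in> borel_measurable (lebesgue_on \<Omega>)" and ubm: "ub \<in> borel_measurable (lebesgue_on \<Omega>)"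
    and ab: "AE x in lebesgue_on \<Omega>. ua x \<le> ub x"
    and ud: "udag \<in> Uad \<Omega> ua ub"
    and src: "L2norm \<Omega> (\<lambda>x. udag x - PUad \<Omega> ua ub (Sadj w) x) = 0"
    and \<alpha>: "\<And>k. k \<ge> 1 \<Longrightarrow> \<alpha> k > 0"
    and alg: "inexact_bregman \<Omega> ua ub A Aadj z \<alpha> (\<lambda>k. 0) uin"
    and k: "k \<ge> 1"
  shows "(L2norm \<Omega> (\<lambda>x. uin k x - udag x))\<^sup>2 \<le>
      (\<Sum>i=1..k. (1 / \<alpha> i) * inner (A (uin k) - A udag) (z - A (uin i))) - inner (S (uin k) - S udag) w"
proof -
  obtain k' where kk: "k = Suc k'" using k by (cases k) auto
  have ukU: "uin k \<in> Uad \<Omega> ua ub" and B: "Bfun \<Omega> ua ub A Aadj z (\<alpha> k) (lam_in \<alpha> A Aadj z uin (k - 1)) (uin k) \<le> 0"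
    using alg k unfolding inexact_bregman_def by auto
  define v where "v = lam_in \<alpha> A Aadj z uin k"
  have vL: "v \<in> L2 \<Omega>" unfolding v_def by (rule lam_in_L2[OF Aadj])
  have Bv: "(1 + 1 / \<alpha> k) * L2norm \<Omega> (\<lambda>y. uin k y - PUad \<Omega> ua ub v y) \<le> 0"
    using B unfolding Bfun_def v_def kk using lam_in_Suc[of \<alpha> k' Aadj z A uin] by simp
  have "1 / \<alpha> k > 0" using \<alpha>[OF k] by simp
  hence pos: "1 + 1 / \<alpha> k > 0" by linarith
  have n0: "L2norm \<Omega> (\<lambda>y. uin k y - PUad \<Omega> ua ub v y) \<le> 0"
    using Bv pos by (simp add: mult_le_0_iff)
  have ukL: "uin k \<in> L2 \<Omega>" using ukU by (simp add: Uad_def)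
  have udL: "udag \<in> L2 \<Omega>" using ud by (simp add: Uad_def)
  have PvU: "PUad \<Omega> ua ub v \<in> Uad \<Omega> ua ub" using P_ae(1)[OF vL ud uam ubm ab] .
  have PvL: "PUad \<Omega> ua ub v \<in> L2 \<Omega>" using PvU by (simp add: Uad_def)
  have ae1: "AE x in lebesgue_on \<Omega>. uin k x - PUad \<Omega> ua ub v x = 0"
    using L2norm_zero_ae[OF L2_diff[OF ukL PvL] n0] .
  have ae2: "AE x in lebesgue_on \<Omega>. PUad \<Omega> ua ub v x = clamp ua ub v x"
    using P_ae(2)[OF vL ud uam ubm ab] .
  define p where "p = Sadj w"
  have pL: "p \<in> L2 \<Omega>" unfolding p_def by (rule adj_L2[OF Sadj])
  have PpL: "PUad \<Omega> ua ub p \<in> L2 \<Omega>" using P_ae(1)[OF pL ud uam ubm ab] by (simp add: Uad_def)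
  have ae3: "AE x in lebesgue_on \<Omega>. udag x - PUad \<Omega> ua ub p x = 0"
    using L2norm_zero_ae[OF L2_diff[OF udL PpL]] src unfolding p_def by simp
  have ae4: "AE x in lebesgue_on \<Omega>. PUad \<Omega> ua ub p x = clamp ua ub p x"
    using P_ae(2)[OF pL ud uam ubm ab] .
  define d where "d = (\<lambda>x. uin k x - udag x)"
  have dL: "d \<in> L2 \<Omega>" unfolding d_def using L2_diff[OF ukL udL] .
  have aeI: "AE x in lebesgue_on \<Omega>. (d x)\<^sup>2 \<le> (v x - p x) * d x"
    using ae1 ae2 ae3 ae4 ab
  proof eventually_elim
    case (elim x)
    then show ?case unfolding d_def using clamp_firm[of "ua x" "ub x" "v x" "p x"]
      by (simp add: clamp_def)
  qed
  have int1: "(LINT x|lebesgue_on \<Omega>. (d x)\<^sup>2) \<le> (LINT x|lebesgue_on \<Omega>. (v x - p x) * d x)"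
    using aeI L2_D(2)[OF dL] L2_prod_int[OF L2_diff[OF vL pL] dL]
    by (intro integral_mono_AE) auto
  have int2: "(LINT x|lebesgue_on \<Omega>. (v x - p x) * d x) = (LINT x|lebesgue_on \<Omega>. d x * v x) - (LINT x|lebesgue_on \<Omega>. d x * p x)"
  proof -
    have "(LINT x|lebesgue_on \<Omega>. (v x - p x) * d x) = (LINT x|lebesgue_on \<Omega>. d x * v x - d x * p x)"
      by (simp add: algebra_simps)
    also have "\<dots> = (LINT x|lebesgue_on \<Omega>. d x * v x) - (LINT x|lebesgue_on \<Omega>. d x * p x)"
      using L2_prod_int[OF dL vL] L2_prod_int[OF dL pL] by (rule Bochner_Integration.integral_diff)
    finally show ?thesis .
  qed
  have int3: "(LINT x|lebesgue_on \<Omega>. d x * p x) = inner (S (uin k) - S udag) w"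
    using adj_inner[OF Sadj dL, of w] lin_diff[OF Slin ukL udL] unfolding p_def d_def by simp
  have int4: "(LINT x|lebesgue_on \<Omega>. d x * v x) = (\<Sum>i=1..k. (1 / \<alpha> i) * inner (A (uin k) - A udag) (z - A (uin i)))"
  proof -
    have "(LINT x|lebesgue_on \<Omega>. d x * v x) = (LINT x|lebesgue_on \<Omega>. (\<Sum>i=1..k. (1 / \<alpha> i) * (d x * Aadj (z - A (uin i)) x)))"
      unfolding v_def lam_in_def by (simp add: sum_distrib_left algebra_simps)
    also have "\<dots> = (\<Sum>i=1..k. (LINT x|lebesgue_on \<Omega>. (1 / \<alpha> i) * (d x * Aadj (z - A (uin i)) x)))"
      by (rule Bochner_Integration.integral_sum) (use L2_prod_int[OF dL adj_L2[OF Aadj]] in auto)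
    also have "\<dots> = (\<Sum>i=1..k. (1 / \<alpha> i) * (LINT x|lebesgue_on \<Omega>. d x * Aadj (z - A (uin i)) x))"
      by simp
    also have "\<dots> = (\<Sum>i=1..k. (1 / \<alpha> i) * inner (A (uin k) - A udag) (z - A (uin i)))"
      using adj_inner[OF Aadj dL] lin_diff[OF Alin ukL udL] unfolding d_def by simp
    finally show ?thesis .
  qed
  have "(L2norm \<Omega> (\<lambda>x. uin k x - udag x))\<^sup>2 = (LINT x|lebesgue_on \<Omega>. (d x)\<^sup>2)"
    using L2norm_sq[OF dL] unfolding d_def by simp
  thus ?thesis using int1 int2 int3 int4 by linarith
qed

lemma conv_box: "(a::real) \<le> p \<Longrightarrow> p \<le> b \<Longrightarrow> a \<le> q \<Longrightarrow> q \<le> b \<Longrightarrow> 0 \<le> t \<Longrightarrow> t \<le> 1 \<Longrightarrow>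
   a \<le> p + t * (q - p) \<and> p + t * (q - p) \<le> b"
proof -
  assume h: "a \<le> p" "p \<le> b" "a \<le> q" "q \<le> b" "0 \<le> t" "t \<le> 1"
  have e: "p + t * (q - p) = (1 - t) * p + t * q" by (simp add: algebra_simps)
  have t1: "0 \<le> 1 - t" using h by simp
  have "(1 - t) * a \<le> (1 - t) * p" "t * a \<le> t * q" "(1 - t) * p \<le> (1 - t) * b" "t * q \<le> t * b"
    using mult_left_mono[OF h(1) t1] mult_left_mono[OF h(3) h(5)] mult_left_mono[OF h(2) t1] mult_left_mono[OF h(4) h(5)]
    by auto
  moreover have "(1 - t) * a + t * a = a" "(1 - t) * b + t * b = b" by (simp_all add: algebra_simps)
  ultimately show ?thesis unfolding e by linarith
qed

lemma opt_VI:
  fixes S :: "(real^'n \<Rightarrow> real) \<Rightarrow> 'y::real_inner"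
  assumes Slin: "L2_bounded_linear \<Omega> S" and ud: "udag \<in> Uad \<Omega> ua ub" and u: "u \<in> Uad \<Omega> ua ub"
    and mn: "\<And>u. u \<in> Uad \<Omega> ua ub \<Longrightarrow> (1/2) * (norm (S udag - z))\<^sup>2 \<le> (1/2) * (norm (S u - z))\<^sup>2"
  shows "inner (z - S udag) (S udag - S u) \<ge> 0"
proof (rule ccontr)
  assume c: "\<not> inner (z - S udag) (S udag - S u) \<ge> 0"
  define b where "b = S udag - z"
  define dd where "dd = S u - S udag"
  have neg: "inner b dd < 0" using c unfolding b_def dd_def
    by (metis inner_minus_left inner_minus_right minus_diff_eq not_le)
  have udL: "udag \<in> L2 \<Omega>" and uL: "u \<in> L2 \<Omega>" using ud u by (auto simp: Uad_def)
  have key: "2 * inner b dd + t * (norm dd)\<^sup>2 \<ge> 0" if t: "0 < t" "t \<le> 1" for t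
  proof -
    define ut where "ut = (\<lambda>x. udag x + t * (u x - udag x))"
    have utL: "ut \<in> L2 \<Omega>" unfolding ut_def using L2_add[OF udL L2_scale[OF L2_diff[OF uL udL]]] .
    have A1: "AE x in lebesgue_on \<Omega>. ua x \<le> udag x \<and> udag x \<le> ub x" using ud by (simp add: Uad_def)
    have A2: "AE x in lebesgue_on \<Omega>. ua x \<le> u x \<and> u x \<le> ub x" using u by (simp add: Uad_def)
    have "AE x in lebesgue_on \<Omega>. ua x \<le> ut x \<and> ut x \<le> ub x"
      using A1 A2
    proof eventually_elim
      case (elim x)
      show ?case unfolding ut_def using conv_box[of "ua x" "udag x" "ub x" "u x" t] elim t by auto
    qed
    hence utU: "ut \<in> Uad \<Omega> ua ub" using utL by (simp add: Uad_def)
    have Sut: "S ut = S udag + t *\<^sub>R dd" unfolding ut_def dd_def using lin_comb[OF Slin udL uL] .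
    have "(norm b)\<^sup>2 \<le> (norm (b + t *\<^sub>R dd))\<^sup>2"
      using mn[OF utU] unfolding Sut b_def by (simp add: algebra_simps)
    also have "\<dots> = (norm b)\<^sup>2 + t * (2 * inner b dd + t * (norm dd)\<^sup>2)"
      unfolding power2_norm_eq_inner by (simp add: inner_add_left inner_add_right inner_commute algebra_simps power2_eq_square)
    finally have "0 \<le> t * (2 * inner b dd + t * (norm dd)\<^sup>2)" by simp
    thus ?thesis using t by (simp add: zero_le_mult_iff)
  qed
  have dd0: "dd \<noteq> 0" using neg by auto
  hence n0: "(norm dd)\<^sup>2 > 0" by simp
  define t where "t = min 1 (- inner b dd / (norm dd)\<^sup>2)"
  have t0: "0 < t" unfolding t_def using neg n0 by (simp add: field_simps)
  have t1: "t \<le> 1" unfolding t_def by simp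
  have "t * (norm dd)\<^sup>2 \<le> (- inner b dd / (norm dd)\<^sup>2) * (norm dd)\<^sup>2"
    unfolding t_def using n0 by (intro mult_right_mono) auto
  also have "\<dots> = - inner b dd" using n0 by simp
  finally have "2 * inner b dd + t * (norm dd)\<^sup>2 < 0" using neg by linarith
  thus False using key[OF t0 t1] by linarith
qed

lemma iter_bound:
  fixes S A :: "(real^'n \<Rightarrow> real) \<Rightarrow> 'y::real_inner"
  assumes Slin: "L2_bounded_linear \<Omega> S" and Sadj: "is_adjoint \<Omega> S Sadj"
    and Alin: "L2_bounded_linear \<Omega> A" and Aadj: "is_adjoint \<Omega> A Aadj"
    and uam: "ua \<in> borel_measurable (lebesgue_on \<Omega>)" and ubm: "ub \<in> borel_measurable (lebesgue_on \<Omega>)"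
    and ab: "AE x in lebesgue_on \<Omega>. ua x \<le> ub x"
    and ud: "udag \<in> Uad \<Omega> ua ub"
    and mn: "\<And>u. u \<in> Uad \<Omega> ua ub \<Longrightarrow> (1/2) * (norm (S udag - z))\<^sup>2 \<le> (1/2) * (norm (S u - z))\<^sup>2"
    and src: "L2norm \<Omega> (\<lambda>x. udag x - PUad \<Omega> ua ub (Sadj w) x) = 0"
    and dA: "\<And>u. u \<in> Uad \<Omega> ua ub \<Longrightarrow> norm (S u - A u) \<le> d" and d0: "d \<ge> 0"
    and \<alpha>: "\<And>k. k \<ge> 1 \<Longrightarrow> \<alpha> k > 0"
    and alg: "inexact_bregman \<Omega> ua ub A Aadj z \<alpha> (\<lambda>k. 0) uin"
  shows "(\<Sum>k=1..K. (1 / \<alpha> k) * (L2norm \<Omega> (\<lambda>x. uin k x - udag x))\<^sup>2) \<le>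
     (1/2)*(norm w)\<^sup>2 + (\<Sum>k=1..K. d*2*(1 / \<alpha> k)*(gam \<alpha> k * norm(z - S udag) + norm w) + (1/2)*(gam \<alpha> k)\<^sup>2*d\<^sup>2)"
proof -
  have ukU: "\<And>k. k \<ge> 1 \<Longrightarrow> uin k \<in> Uad \<Omega> ua ub" using alg unfolding inexact_bregman_def by auto
  have f1: "\<And>k. 1 \<le> k \<Longrightarrow> 0 < 1 / \<alpha> k" using \<alpha> by simp
  have f3: "norm (S udag - A udag) \<le> d" using dA[OF ud] .
  have f4: "\<And>k. 1 \<le> k \<Longrightarrow> norm (S (uin k) - A (uin k)) \<le> d" using dA ukU by blast
  have f5: "\<And>k. 1 \<le> k \<Longrightarrow> 0 \<le> inner (z - S udag) (S udag - S (uin k))"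
      using opt_VI[OF Slin ud ukU mn] by blast
  have f6: "\<And>k. 1 \<le> k \<Longrightarrow> (L2norm \<Omega> (\<lambda>x. uin k x - udag x))\<^sup>2 \<le>
        (\<Sum>i=1..k. 1 / \<alpha> i * inner (A (uin k) - A udag) (z - A (uin i))) - inner (S (uin k) - S udag) w"
      using iter_E[OF Slin Sadj Alin Aadj uam ubm ab ud src \<alpha> alg] by blast
  have "(\<Sum>k=1..K. (1 / \<alpha> k) * (L2norm \<Omega> (\<lambda>x. uin k x - udag x))\<^sup>2) + (1/2)*(norm ((\<Sum>i=1..K. (1 / \<alpha> i) *\<^sub>R (A udag - A (uin i))) - w))\<^sup>2
    \<le> (1/2)*(norm w)\<^sup>2 + (\<Sum>k=1..K. d*2*(1 / \<alpha> k)*((\<Sum>j=1..k. 1 / \<alpha> j)*norm(z - S udag) + norm w) + (1/2)*(\<Sum>j=1..k. 1 / \<alpha> j)\<^sup>2*d\<^sup>2)"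
    using key_sum[OF f1 d0 f3 f4 f5 f6] .
  moreover have "0 \<le> (1/2)*(norm ((\<Sum>i=1..K. (1 / \<alpha> i) *\<^sub>R (A udag - A (uin i))) - w))\<^sup>2" by simp
  ultimately show ?thesis unfolding gam_def by linarith
qed

lemma L2norm_nonneg: "L2norm \<Omega> f \<ge> 0"
  unfolding L2norm_def by (simp add: integral_nonneg_AE)

definition hc :: "(nat \<Rightarrow> real) \<Rightarrow> nat \<Rightarrow> real" where
  "hc \<alpha> i = rho \<alpha> i / \<alpha> i + gam \<alpha> (i - 1) / \<alpha> i + gam \<alpha> (i - 1) * rho \<alpha> i / \<alpha> i
     + (rho \<alpha> i)\<^sup>2 / (\<alpha> i)\<^sup>2 + (rho \<alpha> i)\<^sup>2 / \<alpha> i"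

lemma gam_nonneg: "(\<And>k. k \<ge> 1 \<Longrightarrow> \<alpha> k > 0) \<Longrightarrow> gam \<alpha> k \<ge> 0"
  unfolding gam_def by (rule sum_nonneg) (simp add: less_imp_le)

lemma rho_nonneg: "\<alpha> i > 0 \<Longrightarrow> rho \<alpha> i \<ge> 0"
  unfolding rho_def by simp

lemma Hterm_props:
  assumes \<alpha>: "\<And>k. k \<ge> 1 \<Longrightarrow> \<alpha> k > 0" and i: "i \<ge> 1" and d0: "0 \<le> d"
  shows "0 \<le> Hterm \<alpha> d i" "0 \<le> hc \<alpha> i" "d \<le> 1 \<Longrightarrow> Hterm \<alpha> d i \<le> d * hc \<alpha> i"
proof -
  have a: "\<alpha> i > 0" using \<alpha> i by blast
  have r: "rho \<alpha> i \<ge> 0" using rho_nonneg[of \<alpha> i, OF a] .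
  have g: "gam \<alpha> (i - 1) \<ge> 0" using gam_nonneg[OF \<alpha>] .
  define X where "X = rho \<alpha> i / \<alpha> i + gam \<alpha> (i - 1) / \<alpha> i + gam \<alpha> (i - 1) * rho \<alpha> i / \<alpha> i"
  define Y where "Y = (rho \<alpha> i)\<^sup>2 / (\<alpha> i)\<^sup>2 + (rho \<alpha> i)\<^sup>2 / \<alpha> i"
  have X: "X \<ge> 0" unfolding X_def using a r g by (intro add_nonneg_nonneg) auto
  have Y: "Y \<ge> 0" unfolding Y_def using a by (intro add_nonneg_nonneg) auto
  have H: "Hterm \<alpha> d i = d * X + d\<^sup>2 * Y" unfolding Hterm_def X_def Y_def by simp
  have hc: "hc \<alpha> i = X + Y" unfolding hc_def X_def Y_def by simp
  show "0 \<le> Hterm \<alpha> d i" unfolding H using X Y d0 by simp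
  show "0 \<le> hc \<alpha> i" unfolding hc using X Y by simp
  assume d1: "d \<le> 1"
  have "d\<^sup>2 \<le> d" using d0 d1 by (simp add: power2_eq_square mult_left_le)
  hence "d\<^sup>2 * Y \<le> d * Y" using Y by (rule mult_right_mono)
  thus "Hterm \<alpha> d i \<le> d * hc \<alpha> i" unfolding H hc by (simp add: algebra_simps)
qed

lemma select_exists:
  fixes E \<alpha> :: "nat \<Rightarrow> real"
  assumes N: "N \<ge> 1" and M: "M > 0" and aM: "\<And>k. k \<ge> 1 \<Longrightarrow> \<alpha> k \<le> M"
    and a0: "\<And>k. k \<ge> 1 \<Longrightarrow> \<alpha> k > 0" and E0: "\<And>k. E k \<ge> 0"
    and sb: "(\<Sum>k=1..2*N. (1 / \<alpha> k) * E k) \<le> B"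
  shows "\<exists>k. N < k \<and> k \<le> 2*N \<and> E k * real N \<le> M * B"
proof (rule ccontr)
  assume c: "\<not> ?thesis"
  have Npos: "real N > 0" using N by simp
  have lt: "B / real N < (1 / \<alpha> k) * E k" if k: "k \<in> {N<..2*N}" for k
  proof -
    have k1: "k \<ge> 1" using k by simp
    have "E k * real N > M * B" using c k by auto
    hence "B / real N < E k / M" using M Npos by (simp add: field_simps)
    also have "E k / M \<le> (1 / \<alpha> k) * E k"
    proof -
      have "1 / M \<le> 1 / \<alpha> k" using aM[OF k1] a0[OF k1] by (simp add: frac_le)
      hence "(1 / M) * E k \<le> (1 / \<alpha> k) * E k" using E0[of k] by (rule mult_right_mono)
      thus ?thesis by simp
    qed
    finally show ?thesis .
  qed
  have "(\<Sum>k\<in>{N<..2*N}. B / real N) < (\<Sum>k\<in>{N<..2*N}. (1 / \<alpha> k) * E k)"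
    using N by (intro sum_strict_mono lt) auto
  moreover have "(\<Sum>k\<in>{N<..2*N}. B / real N) = B" using Npos by simp
  moreover have "(\<Sum>k\<in>{N<..2*N}. (1 / \<alpha> k) * E k) \<le> (\<Sum>k=1..2*N. (1 / \<alpha> k) * E k)"
  proof (rule sum_mono2)
    show "finite {1..2*N}" by simp
    show "{N<..2*N} \<subseteq> {1..2*N}" by auto
    show "\<And>b. b \<in> {1..2 * N} - {N<..2 * N} \<Longrightarrow> 0 \<le> 1 / \<alpha> b * E b"
      using a0 E0 by (simp add: less_imp_le)
  qed
  ultimately show False using sb by linarith
qed

theorem corollary4p3:
  fixes \<Omega> :: "(real^'n) set"
    and S :: "(real^'n \<Rightarrow> real) \<Rightarrow> 'y::{real_inner, complete_space}"
    and Sadj :: "'y \<Rightarrow> (real^'n \<Rightarrow> real)"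
    and Sh :: "real \<Rightarrow> (real^'n \<Rightarrow> real) \<Rightarrow> 'y"
    and Shadj :: "real \<Rightarrow> 'y \<Rightarrow> (real^'n \<Rightarrow> real)"
    and z :: 'y and ua ub udag :: "real^'n \<Rightarrow> real"
    and \<delta> :: "real \<Rightarrow> real" and \<alpha> :: "nat \<Rightarrow> real" and hmax :: real
  assumes \<Omega>: "\<Omega> \<in> sets lebesgue" "bounded \<Omega>"
    and S: "L2_bounded_linear \<Omega> S" "is_adjoint \<Omega> S Sadj"
    and uab: "ua \<in> Linfty \<Omega>" "ub \<in> Linfty \<Omega>" "AE x in lebesgue_on \<Omega>. ua x \<le> ub x"
    and Sh: "\<And>h. h > 0 \<Longrightarrow> L2_bounded_linear \<Omega> (Sh h) \<and> is_adjoint \<Omega> (Sh h) (Shadj h) \<and>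
                 (\<exists>B. finite B \<and> Sh h ` L2 \<Omega> \<subseteq> span B)"
    and \<delta>: "continuous_on {0..} \<delta>" "mono_on {0..} \<delta>" "\<And>h. h \<ge> 0 \<Longrightarrow> \<delta> h \<ge> 0" "\<delta> 0 = 0"
    and \<delta>_bound: "\<And>h uh. h \<ge> 0 \<Longrightarrow> uh \<in> Uad \<Omega> ua ub \<Longrightarrow>
        norm (S uh - Sh h uh) + L2norm \<Omega> (\<lambda>x. Sadj (Sh h uh - z) x - Shadj h (Sh h uh - z) x) \<le> \<delta> h"
    and \<alpha>: "\<And>k. k \<ge> 1 \<Longrightarrow> \<alpha> k > 0" "\<exists>M. \<forall>k\<ge>1. \<alpha> k \<le> M"
    and udag_sol: "udag \<in> Uad \<Omega> ua ub"
      "\<And>u. u \<in> Uad \<Omega> ua ub \<Longrightarrow> (1/2) * (norm (S udag - z))^2 \<le> (1/2) * (norm (S u - z))^2"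
    and source: "\<exists>w. L2norm \<Omega> (\<lambda>x. udag x - PUad \<Omega> ua ub (Sadj w) x) = 0"
    and hmax: "hmax > 0"
    and alg: "\<And>h. 0 < h \<Longrightarrow> h \<le> hmax \<Longrightarrow>
        inexact_bregman \<Omega> ua ub (Sh h) (Shadj h) z \<alpha> (\<lambda>k. 0) (uin h)"
  shows "\<exists>C::real. \<exists>kh :: real \<Rightarrow> nat.
           (\<forall>h. 0 < h \<and> h \<le> hmax \<longrightarrow> (\<Sum>i=1..kh h. Hterm \<alpha> (\<delta> h) i) \<le> C) \<and>
           filterlim kh at_top (at_right 0) \<and>
           ((\<lambda>h. L2norm \<Omega> (\<lambda>x. uin h (kh h) x - udag x)) \<longlongrightarrow> 0) (at_right 0)"
proof -
  obtain w where src: "L2norm \<Omega> (\<lambda>x. udag x - PUad \<Omega> ua ub (Sadj w) x) = 0" using source by blast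
  obtain M where aM: "\<forall>k\<ge>1. \<alpha> k \<le> M" using \<alpha>(2) by blast
  have aM': "\<And>k. k \<ge> 1 \<Longrightarrow> \<alpha> k \<le> M" using aM by blast
  have Mpos: "M > 0" using aM'[of 1] \<alpha>(1)[of 1] by simp
  have uam: "ua \<in> borel_measurable (lebesgue_on \<Omega>)" using uab(1) by (simp add: Linfty_def)
  have ubm: "ub \<in> borel_measurable (lebesgue_on \<Omega>)" using uab(2) by (simp add: Linfty_def)
  define B where "B = (1/2)*(norm w)\<^sup>2 + 1"
  have Bpos: "B > 0" unfolding B_def by (simp add: add_nonneg_pos)
  define G where "G = (\<lambda>K. \<Sum>k=1..K. 2*(1 / \<alpha> k)*(gam \<alpha> k * norm(z - S udag) + norm w) + (1/2)*(gam \<alpha> k)\<^sup>2)"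
  define \<Phi> where "\<Phi> = (\<lambda>n. real n + (\<Sum>i=1..2*n. hc \<alpha> i) + G (2*n))"
  define Nset where "Nset = (\<lambda>h. {n. n \<le> nat \<lfloor>1/h\<rfloor> \<and> \<delta> h * \<Phi> n \<le> 1})"
  define N where "N = (\<lambda>h. Max (Nset h))"
  define E where "E = (\<lambda>h k. (L2norm \<Omega> (\<lambda>x. uin h k x - udag x))\<^sup>2)"
  define kh where "kh = (\<lambda>h. if N h = 0 then 0 else (SOME k. N h < k \<and> k \<le> 2*N h \<and> E h k * real (N h) \<le> M * B))"
  have gnn: "\<And>k. gam \<alpha> k \<ge> 0" using gam_nonneg[OF \<alpha>(1)] .
  have Gnn: "\<And>K. G K \<ge> 0"
  proof -
    fix K
    have "\<And>k. k \<in> {1..K} \<Longrightarrow> 0 \<le> 2*(1 / \<alpha> k)*(gam \<alpha> k * norm(z - S udag) + norm w) + (1/2)*(gam \<alpha> k)\<^sup>2"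
    proof -
      fix k assume k: "k \<in> {1..K}"
      have "\<alpha> k > 0" using \<alpha>(1) k by simp
      thus "0 \<le> 2*(1 / \<alpha> k)*(gam \<alpha> k * norm(z - S udag) + norm w) + (1/2)*(gam \<alpha> k)\<^sup>2"
        using gnn[of k] by (intro add_nonneg_nonneg mult_nonneg_nonneg) auto
    qed
    thus "G K \<ge> 0" unfolding G_def by (rule sum_nonneg)
  qed
  have hcnn: "\<And>n. (\<Sum>i=1..n. hc \<alpha> i) \<ge> 0"
    by (rule sum_nonneg) (use Hterm_props(2)[OF \<alpha>(1) _ order_refl] in simp)
  have Nfin: "finite (Nset h)" for h unfolding Nset_def by (rule finite_subset[of _ "{..nat \<lfloor>1/h\<rfloor>}"]) auto
  have N0: "\<And>h. 0 \<in> Nset h" unfolding Nset_def \<Phi>_def G_def by simp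
  have Nin: "\<And>h. N h \<in> Nset h" unfolding N_def using Nfin N0 by (intro Max_in) auto
  have Nge: "\<And>h m. m \<in> Nset h \<Longrightarrow> m \<le> N h" unfolding N_def using Nfin by (intro Max_ge) auto
  have perh: "(\<Sum>i=1..kh h. Hterm \<alpha> (\<delta> h) i) \<le> 1 \<and> (N h \<ge> 1 \<longrightarrow> N h < kh h \<and> E h (kh h) * real (N h) \<le> M*B)"
    if h: "0 < h" "h \<le> hmax" for h
  proof (cases "N h = 0")
    case True
    then show ?thesis unfolding kh_def by simp
  next
    case False
    have N1: "N h \<ge> 1" using False by simp
    have d0: "\<delta> h \<ge> 0" using \<delta>(3) h by simp
    have dPhi: "\<delta> h * \<Phi> (N h) \<le> 1" using Nin[of h] unfolding Nset_def by simp
    have "real (N h) \<ge> 1" using N1 by simp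
    hence PhiN: "\<Phi> (N h) \<ge> 1" unfolding \<Phi>_def using hcnn[of "2*N h"] Gnn[of "2*N h"] by linarith
    have d1: "\<delta> h \<le> 1" using mult_left_mono[OF PhiN d0] dPhi by simp
    have Shh: "L2_bounded_linear \<Omega> (Sh h)" "is_adjoint \<Omega> (Sh h) (Shadj h)" using Sh[OF h(1)] by auto
    have dA: "\<And>u. u \<in> Uad \<Omega> ua ub \<Longrightarrow> norm (S u - Sh h u) \<le> \<delta> h"
    proof -
      fix u assume u: "u \<in> Uad \<Omega> ua ub"
      have "norm (S u - Sh h u) + L2norm \<Omega> (\<lambda>x. Sadj (Sh h u - z) x - Shadj h (Sh h u - z) x) \<le> \<delta> h"
        using \<delta>_bound[OF _ u, of h] h by simp
      thus "norm (S u - Sh h u) \<le> \<delta> h" using L2norm_nonneg[of \<Omega> "\<lambda>x. Sadj (Sh h u - z) x - Shadj h (Sh h u - z) x"] by linarith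
    qed
    have ib: "(\<Sum>k=1..2*N h. (1 / \<alpha> k) * (L2norm \<Omega> (\<lambda>x. uin h k x - udag x))\<^sup>2) \<le>
     (1/2)*(norm w)\<^sup>2 + (\<Sum>k=1..2*N h. \<delta> h*2*(1 / \<alpha> k)*(gam \<alpha> k * norm(z - S udag) + norm w) + (1/2)*(gam \<alpha> k)\<^sup>2*(\<delta> h)\<^sup>2)"
      by (rule iter_bound[OF S(1) S(2) Shh(1) Shh(2) uam ubm uab(3) udag_sol(1) udag_sol(2) src dA d0 \<alpha>(1) alg[OF h]])
    have dd: "(\<delta> h)\<^sup>2 \<le> \<delta> h" using d0 d1 by (simp add: power2_eq_square mult_left_le)
    have "(\<Sum>k=1..2*N h. \<delta> h*2*(1 / \<alpha> k)*(gam \<alpha> k * norm(z - S udag) + norm w) + (1/2)*(gam \<alpha> k)\<^sup>2*(\<delta> h)\<^sup>2)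
        \<le> (\<Sum>k=1..2*N h. \<delta> h * (2*(1 / \<alpha> k)*(gam \<alpha> k * norm(z - S udag) + norm w) + (1/2)*(gam \<alpha> k)\<^sup>2))"
    proof (rule sum_mono)
      fix k
      have "(1/2)*(gam \<alpha> k)\<^sup>2*(\<delta> h)\<^sup>2 \<le> (1/2)*(gam \<alpha> k)\<^sup>2*\<delta> h"
        using dd by (intro mult_left_mono) auto
      thus "\<delta> h*2*(1 / \<alpha> k)*(gam \<alpha> k * norm(z - S udag) + norm w) + (1/2)*(gam \<alpha> k)\<^sup>2*(\<delta> h)\<^sup>2
          \<le> \<delta> h * (2*(1 / \<alpha> k)*(gam \<alpha> k * norm(z - S udag) + norm w) + (1/2)*(gam \<alpha> k)\<^sup>2)"
        by (simp add: algebra_simps)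
    qed
    also have "\<dots> = \<delta> h * G (2 * N h)" unfolding G_def by (simp add: sum_distrib_left)
    also have "\<dots> \<le> \<delta> h * \<Phi> (N h)" using hcnn d0 unfolding \<Phi>_def by (intro mult_left_mono) auto
    finally have "(\<Sum>k=1..2*N h. \<delta> h*2*(1 / \<alpha> k)*(gam \<alpha> k * norm(z - S udag) + norm w) + (1/2)*(gam \<alpha> k)\<^sup>2*(\<delta> h)\<^sup>2) \<le> 1"
      using dPhi by linarith
    hence sb: "(\<Sum>k=1..2*N h. (1 / \<alpha> k) * E h k) \<le> B" using ib unfolding E_def B_def by linarith
    have E0: "\<And>k. E h k \<ge> 0" unfolding E_def by simp
    have ex: "\<exists>k. N h < k \<and> k \<le> 2*N h \<and> E h k * real (N h) \<le> M * B"
      by (rule select_exists[OF N1 Mpos aM' \<alpha>(1) E0 sb])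
    have khp: "N h < kh h \<and> kh h \<le> 2*N h \<and> E h (kh h) * real (N h) \<le> M * B"
      unfolding kh_def using False someI_ex[OF ex] by simp
    have "(\<Sum>i=1..kh h. Hterm \<alpha> (\<delta> h) i) \<le> (\<Sum>i=1..2*N h. Hterm \<alpha> (\<delta> h) i)"
      by (rule sum_mono2) (use khp Hterm_props(1)[OF \<alpha>(1) _ d0] in auto)
    also have "\<dots> \<le> (\<Sum>i=1..2*N h. \<delta> h * hc \<alpha> i)"
      by (rule sum_mono) (use Hterm_props(3)[OF \<alpha>(1) _ d0 d1] in auto)
    also have "\<dots> = \<delta> h * (\<Sum>i=1..2*N h. hc \<alpha> i)" by (simp add: sum_distrib_left)
    also have "\<dots> \<le> \<delta> h * \<Phi> (N h)" using Gnn d0 unfolding \<Phi>_def by (intro mult_left_mono) auto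
    finally show ?thesis using dPhi khp by linarith
  qed
  have dlim: "(\<delta> \<longlongrightarrow> 0) (at_right 0)"
  proof -
    have "(\<delta> \<longlongrightarrow> \<delta> 0) (at 0 within {0..})" using \<delta>(1) by (simp add: continuous_on_def)
    hence "(\<delta> \<longlongrightarrow> \<delta> 0) (at 0 within {0<..})" by (rule tendsto_within_subset) auto
    thus ?thesis using \<delta>(4) by simp
  qed
  have evN: "eventually (\<lambda>h. 0 < h \<and> h \<le> hmax \<and> m \<le> N h) (at_right 0)" for m
  proof -
    have Pm: "\<Phi> m \<ge> 0" unfolding \<Phi>_def using hcnn[of "2*m"] Gnn[of "2*m"] of_nat_0_le_iff[of m] by linarith
    have ev1: "eventually (\<lambda>h. \<delta> h < 1 / (\<Phi> m + 1)) (at_right 0)"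
      using order_tendstoD(2)[OF dlim, of "1 / (\<Phi> m + 1)"] Pm by simp
    have ev2: "eventually (\<lambda>h. 0 < h \<and> h \<le> hmax \<and> h < 1/(real m + 1)) (at_right 0)"
      unfolding eventually_at_right_field
      by (rule exI[of _ "min hmax (1/(real m+1))"]) (auto simp: hmax)
    show ?thesis using ev1 ev2
    proof eventually_elim
      case (elim h)
      have hp: "0 < h" using elim by simp
      have "h * (real m + 1) < 1" using elim by (simp add: field_simps)
      hence "real m \<le> 1 / h" using hp by (simp add: field_simps)
      hence m1: "m \<le> nat \<lfloor>1/h\<rfloor>" by (simp add: le_nat_floor)
      have d0: "\<delta> h \<ge> 0" using \<delta>(3) hp by simp
      have "\<delta> h * (\<Phi> m + 1) < 1" using elim Pm by (simp add: field_simps)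
      hence "\<delta> h * \<Phi> m \<le> 1" using d0 by (simp add: algebra_simps)
      hence "m \<in> Nset h" using m1 unfolding Nset_def by simp
      thus ?case using Nge elim by simp
    qed
  qed
  show ?thesis
  proof (intro exI[of _ 1] exI[of _ kh] conjI)
    show "\<forall>h. 0 < h \<and> h \<le> hmax \<longrightarrow> (\<Sum>i=1..kh h. Hterm \<alpha> (\<delta> h) i) \<le> 1" using perh by blast
    show "filterlim kh at_top (at_right 0)"
      unfolding filterlim_at_top
    proof
      fix Z :: nat
      show "eventually (\<lambda>h. Z \<le> kh h) (at_right 0)"
        using evN[of "Z+1"]
      proof eventually_elim
        case (elim h)
        hence N1: "N h \<ge> 1" by simp
        have "N h < kh h" using perh[of h] elim N1 by blast
        thus ?case using elim by simp
      qed
    qed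
    show "((\<lambda>h. L2norm \<Omega> (\<lambda>x. uin h (kh h) x - udag x)) \<longlongrightarrow> 0) (at_right 0)"
    proof (rule tendstoI)
      fix e :: real assume e: "e > 0"
      define m where "m = nat \<lceil>M*B/e\<^sup>2\<rceil> + 1"
      show "eventually (\<lambda>h. dist (L2norm \<Omega> (\<lambda>x. uin h (kh h) x - udag x)) 0 < e) (at_right 0)"
        using evN[of m]
      proof eventually_elim
        case (elim h)
        have Nm: "m \<le> N h" using elim by simp
        hence N1: "N h \<ge> 1" unfolding m_def by simp
        have EN: "E h (kh h) * real (N h) \<le> M*B" using perh[of h] elim N1 by simp
        have "M*B/e\<^sup>2 \<le> real (nat \<lceil>M*B/e\<^sup>2\<rceil>)" by (rule real_nat_ceiling_ge)
        hence "M*B/e\<^sup>2 < real m" unfolding m_def by simp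
        also have "\<dots> \<le> real (N h)" using Nm by simp
        finally have "M*B < e\<^sup>2 * real (N h)" using e by (simp add: field_simps)
        hence "E h (kh h) * real (N h) < e\<^sup>2 * real (N h)" using EN by linarith
        hence Elt: "E h (kh h) < e\<^sup>2" using N1 by simp
        have Ln: "L2norm \<Omega> (\<lambda>x. uin h (kh h) x - udag x) \<ge> 0" by (rule L2norm_nonneg)
        have sq: "(L2norm \<Omega> (\<lambda>x. uin h (kh h) x - udag x))\<^sup>2 < e\<^sup>2" using Elt unfolding E_def .
        have "L2norm \<Omega> (\<lambda>x. uin h (kh h) x - udag x) < e"
          using power_less_imp_less_base[OF sq] e by simp
        thus ?case using Ln by simp
      qed
    qed
  qed
qed

end
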